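(* Let $(\mathcal A,r)$ be a population game, $\mathcal G=(\mathcal H,\boldsymbol\eta,W)$ an undirected connected community network, and $\mathbf f$ an imitation mechanism satisfying Assumption 1. Let $\mathbf x^\bullet\in\mathcal X^\bullet\setminus\mathcal X^*$ and $\mathbf y^\bullet=\mathbf x^\bullet\mathbf 1$, and let $i\in\mathcal A$ be an action with $r_i(\mathbf y^\bullet)>r_j(\mathbf y^\bullet)$ for all $j\in\mathcal S_{\mathbf y^\bullet}$. Then there exists $\varepsilon>0$ such that for every $\mathbf x\in\mathcal X$ with $\|\mathbf x-\mathbf x^\bullet\|<\varepsilon$ and $y_i>0$ (where $\mathbf y=\mathbf x\mathbf 1$), one has $\dot y_i>0$, where $\dot y_i=\sum_{h\in\mathcal H}\dot x_{ih}$ is computed from the right-hand side of the network imitation dynamics at $\mathbf x$.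
   Context: Let $\mathcal A$ be a finite set of actions, $\mathcal Y=\{\mathbf y\in\mathbb R_+^{\mathcal A}:\mathbf 1^\top\mathbf y=1\}$, reward functions $r_i:\mathcal Y\to\mathbb R$. Community network $\mathcal G=(\mathcal H,\boldsymbol\eta,W)$: finite $\mathcal H$, $\eta_h>0$ with $\sum_h\eta_h=1$, nonnegative $W$ with positive diagonal; connected = $W$ irreducible; undirected = $W=W^\top$. $\mathcal X=\{\mathbf x\in\mathbb R_+^{\mathcal A\times\mathcal H}:\mathbf 1^\top\mathbf x=\boldsymbol\eta^\top\}$. Imitation mechanism: Lipschitz $\mathbf f:\mathcal Y\to\mathbb R_+^{\mathcal A\times\mathcal A}$. Dynamics: $$\dot x_{ih}=\sum_{j\in\mathcal A}\sum_{k\in\mathcal H}\big(x_{jh}W_{hk}x_{ik}f_{ji}(\mathbf x\mathbf 1)-x_{ih}W_{hk}x_{jk}f_{ij}(\mathbf x\mathbf 1)\big).$$ Assumption 1: $\operatorname{sgn}(f_{ij}(\mathbf y)-f_{ji}(\mathbf y))=\operatorname{sgn}(r_j(\mathbf y)-r_i(\mathbf y))$ for all $i,j,\mathbf y$. Support $\mathcal S_{\mathbf y}=\{i:y_i>0\}$. Nash equilibria: $\mathcal Y^*=\{\mathbf y\in\mathcal Y: y_i>0\Rightarrow r_i(\mathbf y)=\max_{j\in\mathcal A}r_j(\mathbf y)\}$; restricted Nash equilibria: $\mathcal Y^\bullet=\{\mathbf y\in\mathcal Y:y_i>0,y_j>0\Rightarrow r_i(\mathbf y)=r_j(\mathbf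 y)\}$; $\mathcal X^*=\{\mathbf x\in\mathcal X:\mathbf x\mathbf 1\in\mathcal Y^*\}$, $\mathcal X^\bullet=\{\mathbf x\in\mathcal X:\mathbf x\mathbf 1\in\mathcal Y^\bullet\}$. *)

theory Defs
  imports "HOL-Analysis.Analysis"
begin

text \<open>Actions are the elements of a finite type 'a, communities those of a finite type 'h.
  Vectors y in R^A are functions 'a => real, matrices x in R^(A x H) are functions
  'a => 'h => real (x i h = x_{ih}).\<close>

definition simplexY :: "('a::finite \<Rightarrow> real) set" where
  "simplexY = {y. (\<forall>i. 0 \<le> y i) \<and> (\<Sum>i\<in>UNIV. y i) = 1}"

definition stateX :: "('h::finite \<Rightarrow> real) \<Rightarrow> ('a::finite \<Rightarrow> 'h \<Rightarrow> real) set" where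
  "stateX eta = {x. (\<forall>i h. 0 \<le> x i h) \<and> (\<forall>h. (\<Sum>i\<in>UNIV. x i h) = eta h)}"

definition agg :: "('a::finite \<Rightarrow> 'h::finite \<Rightarrow> real) \<Rightarrow> 'a \<Rightarrow> real" where
  "agg x = (\<lambda>i. \<Sum>h\<in>UNIV. x i h)"

definition xdist :: "('a::finite \<Rightarrow> 'h::finite \<Rightarrow> real) \<Rightarrow> ('a \<Rightarrow> 'h \<Rightarrow> real) \<Rightarrow> real" where
  "xdist x z = sqrt (\<Sum>i\<in>UNIV. \<Sum>h\<in>UNIV. (x i h - z i h)^2)"

definition ydist :: "('a::finite \<Rightarrow> real) \<Rightarrow> ('a \<Rightarrow> real) \<Rightarrow> real" where
  "ydist y z = sqrt (\<Sum>i\<in>UNIV. (y i - z i)^2)"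

definition community_network :: "('h::finite \<Rightarrow> real) \<Rightarrow> ('h \<Rightarrow> 'h \<Rightarrow> real) \<Rightarrow> bool" where
  "community_network eta W \<longleftrightarrow>
     (\<forall>h. 0 < eta h) \<and> (\<Sum>h\<in>UNIV. eta h) = 1 \<and>
     (\<forall>h k. 0 \<le> W h k) \<and> (\<forall>h. 0 < W h h)"

text \<open>Connected: W irreducible, i.e. the graph of positive entries is strongly connected.\<close>
definition irreducible_mat :: "('h \<Rightarrow> 'h \<Rightarrow> real) \<Rightarrow> bool" where
  "irreducible_mat W \<longleftrightarrow> (\<forall>h k. (h, k) \<in> {(a, b). 0 < W a b}\<^sup>*)"

definition undirected_mat :: "('h \<Rightarrow> 'h \<Rightarrow> real) \<Rightarrow> bool" where
  "undirected_mat W \<longleftrightarrow> (\<forall>h k. W h k = W k h)"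

definition imitation_mechanism ::
  "(('a::finite \<Rightarrow> real) \<Rightarrow> 'a \<Rightarrow> 'a \<Rightarrow> real) \<Rightarrow> bool" where
  "imitation_mechanism f \<longleftrightarrow>
     (\<forall>y\<in>simplexY. \<forall>i j. 0 \<le> f y i j) \<and>
     (\<exists>L. \<forall>y\<in>simplexY. \<forall>z\<in>simplexY. \<forall>i j. \<bar>f y i j - f z i j\<bar> \<le> L * ydist y z)"

definition assumption1 ::
  "('a::finite \<Rightarrow> ('a \<Rightarrow> real) \<Rightarrow> real) \<Rightarrow> (('a \<Rightarrow> real) \<Rightarrow> 'a \<Rightarrow> 'a \<Rightarrow> real) \<Rightarrow> bool" where
  "assumption1 r f \<longleftrightarrow>
     (\<forall>y\<in>simplexY. \<forall>i j. sgn (f y i j - f y j i) = sgn (r j y - r i y))"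

definition support :: "('a \<Rightarrow> real) \<Rightarrow> 'a set" where
  "support y = {i. 0 < y i}"

definition NashY :: "('a::finite \<Rightarrow> ('a \<Rightarrow> real) \<Rightarrow> real) \<Rightarrow> ('a \<Rightarrow> real) set" where
  "NashY r = {y\<in>simplexY. \<forall>i. 0 < y i \<longrightarrow> r i y = (MAX j\<in>UNIV. r j y)}"

definition RestrNashY :: "('a::finite \<Rightarrow> ('a \<Rightarrow> real) \<Rightarrow> real) \<Rightarrow> ('a \<Rightarrow> real) set" where
  "RestrNashY r = {y\<in>simplexY. \<forall>i j. 0 < y i \<and> 0 < y j \<longrightarrow> r i y = r j y}"

definition NashX :: "('h::finite \<Rightarrow> real) \<Rightarrow> ('a::finite \<Rightarrow> ('a \<Rightarrow> real) \<Rightarrow> real)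
     \<Rightarrow> ('a \<Rightarrow> 'h \<Rightarrow> real) set" where
  "NashX eta r = {x\<in>stateX eta. agg x \<in> NashY r}"

definition RestrNashX :: "('h::finite \<Rightarrow> real) \<Rightarrow> ('a::finite \<Rightarrow> ('a \<Rightarrow> real) \<Rightarrow> real)
     \<Rightarrow> ('a \<Rightarrow> 'h \<Rightarrow> real) set" where
  "RestrNashX eta r = {x\<in>stateX eta. agg x \<in> RestrNashY r}"

definition xdot :: "('h::finite \<Rightarrow> 'h \<Rightarrow> real) \<Rightarrow> (('a::finite \<Rightarrow> real) \<Rightarrow> 'a \<Rightarrow> 'a \<Rightarrow> real)
     \<Rightarrow> ('a \<Rightarrow> 'h \<Rightarrow> real) \<Rightarrow> 'a \<Rightarrow> 'h \<Rightarrow> real" where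
  "xdot W f x i h = (\<Sum>j\<in>UNIV. \<Sum>k\<in>UNIV.
      x j h * W h k * x i k * f (agg x) j i - x i h * W h k * x j k * f (agg x) i j)"

end

theory Submission
  imports Defs
begin

lemma ydot_formula:
  fixes W :: "'h::finite \<Rightarrow> 'h \<Rightarrow> real" and x :: "'a::finite \<Rightarrow> 'h \<Rightarrow> real"
  assumes sym: "\<And>h k. W h k = W k h"
  shows "(\<Sum>h\<in>UNIV. xdot W f x i h) =
    (\<Sum>h\<in>UNIV. \<Sum>k\<in>UNIV. W h k * x i k * (\<Sum>j\<in>UNIV. x j h * (f (agg x) j i - f (agg x) i j)))"
proof -
  define F where "F = f (agg x)"
  have 1: "(\<Sum>h\<in>UNIV. xdot W f x i h) =
     (\<Sum>h\<in>UNIV. \<Sum>j\<in>UNIV. \<Sum>k\<in>UNIV. x j h * W h k * x i k * F j i)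
   - (\<Sum>h\<in>UNIV. \<Sum>j\<in>UNIV. \<Sum>k\<in>UNIV. x i h * W h k * x j k * F i j)"
    unfolding xdot_def F_def by (simp add: sum_subtractf)
  have 2: "(\<Sum>h\<in>UNIV. \<Sum>j\<in>UNIV. \<Sum>k\<in>UNIV. x i h * W h k * x j k * F i j)
      = (\<Sum>j\<in>UNIV. \<Sum>h\<in>UNIV. \<Sum>k\<in>UNIV. x i h * W h k * x j k * F i j)"
    by (rule sum.swap)
  also have "\<dots> = (\<Sum>j\<in>UNIV. \<Sum>k\<in>UNIV. \<Sum>h\<in>UNIV. x i h * W h k * x j k * F i j)"
    by (rule sum.cong[OF refl], rule sum.swap)
  also have "\<dots> = (\<Sum>j\<in>UNIV. \<Sum>h\<in>UNIV. \<Sum>k\<in>UNIV. x j h * W h k * x i k * F i j)"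
    by (simp add: sym mult.commute mult.left_commute)
  also have "\<dots> = (\<Sum>h\<in>UNIV. \<Sum>j\<in>UNIV. \<Sum>k\<in>UNIV. x j h * W h k * x i k * F i j)"
    by (rule sum.swap)
  finally have 2: "(\<Sum>h\<in>UNIV. \<Sum>j\<in>UNIV. \<Sum>k\<in>UNIV. x i h * W h k * x j k * F i j)
      = (\<Sum>h\<in>UNIV. \<Sum>j\<in>UNIV. \<Sum>k\<in>UNIV. x j h * W h k * x i k * F i j)" .
  have 3: "(\<Sum>h\<in>UNIV. xdot W f x i h) =
      (\<Sum>h\<in>UNIV. \<Sum>j\<in>UNIV. \<Sum>k\<in>UNIV. W h k * x i k * (x j h * (F j i - F i j)))"
    unfolding 1 2 by (simp add: sum_subtractf[symmetric] algebra_simps)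
  also have "\<dots> = (\<Sum>h\<in>UNIV. \<Sum>k\<in>UNIV. \<Sum>j\<in>UNIV. W h k * x i k * (x j h * (F j i - F i j)))"
    by (rule sum.cong[OF refl], rule sum.swap)
  also have "\<dots> = (\<Sum>h\<in>UNIV. \<Sum>k\<in>UNIV. W h k * x i k * (\<Sum>j\<in>UNIV. x j h * (F j i - F i j)))"
    by (simp add: sum_distrib_left)
  finally show ?thesis unfolding F_def .
qed

lemma comp_le_xdist:
  fixes x z :: "'a::finite \<Rightarrow> 'h::finite \<Rightarrow> real"
  shows "\<bar>x j h - z j h\<bar> \<le> xdist x z"
proof -
  have "(x j h - z j h)^2 \<le> (\<Sum>h\<in>UNIV. (x j h - z j h)^2)"
    by (rule member_le_sum) auto
  also have "\<dots> \<le> (\<Sum>i\<in>UNIV. \<Sum>h\<in>UNIV. (x i h - z i h)^2)"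
    by (rule member_le_sum[where f="\<lambda>i. \<Sum>h\<in>UNIV. (x i h - z i h)^2"]) (auto intro: sum_nonneg)
  finally have "sqrt ((x j h - z j h)^2) \<le> sqrt (\<Sum>i\<in>UNIV. \<Sum>h\<in>UNIV. (x i h - z i h)^2)"
    by (rule real_sqrt_le_mono)
  then show ?thesis unfolding xdist_def real_sqrt_abs .
qed

lemma ydist_le:
  fixes x z :: "'a::finite \<Rightarrow> 'h::finite \<Rightarrow> real"
  shows "ydist (agg x) (agg z) \<le> real (CARD('a) * CARD('h)) * xdist x z"
proof -
  have "ydist (agg x) (agg z) = L2_set (\<lambda>j. agg x j - agg z j) UNIV"
    unfolding ydist_def L2_set_def by simp
  also have "\<dots> \<le> (\<Sum>j\<in>UNIV. \<bar>agg x j - agg z j\<bar>)" by (rule L2_set_le_sum_abs)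
  also have "\<dots> \<le> (\<Sum>j\<in>(UNIV::'a set). real CARD('h) * xdist x z)"
  proof -
   have "\<bar>agg x j - agg z j\<bar> \<le> real CARD('h) * xdist x z" for j
   proof -
    have "\<bar>agg x j - agg z j\<bar> = \<bar>\<Sum>h\<in>UNIV. x j h - z j h\<bar>"
      unfolding agg_def by (simp add: sum_subtractf)
    also have "\<dots> \<le> (\<Sum>h\<in>UNIV. \<bar>x j h - z j h\<bar>)" by (rule sum_abs)
    also have "\<dots> \<le> (\<Sum>h\<in>(UNIV::'h set). xdist x z)" by (intro sum_mono comp_le_xdist)
    finally show "\<bar>agg x j - agg z j\<bar> \<le> real CARD('h) * xdist x z" by simp
   qed
   then show ?thesis by (intro sum_mono) auto
  qed
  also have "\<dots> = real (CARD('a) * CARD('h)) * xdist x z" by simp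
  finally show ?thesis .
qed

lemma aux_cancel: "(P::real) \<noteq> 0 \<Longrightarrow> N \<noteq> 0 \<Longrightarrow> P * (N * (a / (2*N*P))) = a/2"
proof -
  assume "P \<noteq> 0" "N \<noteq> 0"
  then have "P * (N * (a / (2*N*P))) = (P * N) * a / (2 * (N * P))" by (simp add: mult.assoc)
  also have "\<dots> = a / 2" using \<open>P \<noteq> 0\<close> \<open>N \<noteq> 0\<close> by (simp add: mult.commute)
  finally show ?thesis .
qed

theorem lemma1:
  fixes r :: "'a::finite \<Rightarrow> ('a \<Rightarrow> real) \<Rightarrow> real"
    and eta :: "'h::finite \<Rightarrow> real"
    and W :: "'h \<Rightarrow> 'h \<Rightarrow> real"
    and f :: "('a \<Rightarrow> real) \<Rightarrow> 'a \<Rightarrow> 'a \<Rightarrow> real"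
    and xb :: "'a \<Rightarrow> 'h \<Rightarrow> real"
    and i :: 'a
  assumes r_cont: "\<And>j. continuous_on simplexY (r j)"
    and net: "community_network eta W"
    and undirected: "undirected_mat W"
    and connected: "irreducible_mat W"
    and imit: "imitation_mechanism f"
    and A1: "assumption1 r f"
    and xb: "xb \<in> RestrNashX eta r - NashX eta r"
    and better: "\<And>j. j \<in> support (agg xb) \<Longrightarrow> r i (agg xb) > r j (agg xb)"
  shows "\<exists>\<epsilon>>0. \<forall>x\<in>stateX eta. xdist x xb < \<epsilon> \<and> agg x i > 0 \<longrightarrow>
           (\<Sum>h\<in>UNIV. xdot W f x i h) > 0"
proof -
  define yb where "yb = agg xb"
  define S where "S = support yb"
  have xbX: "xb \<in> stateX eta" and ybY: "yb \<in> simplexY"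
    using xb unfolding RestrNashX_def RestrNashY_def yb_def by auto
  have xbnn: "\<And>j h. 0 \<le> xb j h" using xbX unfolding stateX_def by auto
  have zeroS: "xb j h = 0" if "j \<notin> S" for j h
  proof -
    have "\<not> 0 < (\<Sum>h\<in>UNIV. xb j h)" using that unfolding S_def support_def yb_def agg_def by auto
    moreover have "0 \<le> (\<Sum>h\<in>UNIV. xb j h)" by (intro sum_nonneg xbnn)
    ultimately have "(\<Sum>h\<in>UNIV. xb j h) = 0" by linarith
    then show ?thesis using sum_nonneg_eq_0_iff[of UNIV "xb j"] xbnn by auto
  qed
  have etapos: "\<And>h. 0 < eta h" and Wnn: "\<And>h k. 0 \<le> W h k" and Wd: "\<And>h. 0 < W h h"
    and etasum: "(\<Sum>h\<in>UNIV. eta h) = 1"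
    using net unfolding community_network_def by auto
  have sym: "\<And>h k. W h k = W k h" using undirected unfolding undirected_mat_def by auto
  obtain L where Lip: "\<And>y z a b. y \<in> simplexY \<Longrightarrow> z \<in> simplexY \<Longrightarrow> \<bar>f y a b - f z a b\<bar> \<le> L * ydist y z"
    using imit unfolding imitation_mechanism_def by blast
  define g0 where "g0 j = f yb j i - f yb i j" for j
  have g0pos: "0 < g0 j" if "j \<in> S" for j
  proof -
    have "r i yb > r j yb" using better that unfolding S_def yb_def by auto
    then have "sgn (r i yb - r j yb) = 1" by simp
    moreover have "sgn (f yb j i - f yb i j) = sgn (r i yb - r j yb)"
      using A1 ybY unfolding assumption1_def by blast
    ultimately show ?thesis unfolding g0_def by (simp add: sgn_1_pos)
  qed
  define d where "d = Min (insert 1 (g0 ` S))"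
  have dpos: "0 < d" unfolding d_def using g0pos by (subst Min_gr_iff) auto
  have dle: "d \<le> g0 j" if "j \<in> S" for j unfolding d_def using that by (intro Min_le) auto
  define C0 where "C0 = (\<Sum>j\<in>UNIV. \<bar>g0 j\<bar>)"
  have C0ge: "\<bar>g0 j\<bar> \<le> C0" for j unfolding C0_def by (rule member_le_sum) auto
  define C where "C = C0 + d"
  have Cpos: "0 < C" using C0ge[of i] dpos unfolding C_def by linarith
  define m where "m = Min (range eta)"
  have mpos: "0 < m" unfolding m_def using etapos by (subst Min_gr_iff) auto
  have mle: "m \<le> eta h" for h unfolding m_def by (rule Min_le) auto
  define L' where "L' = \<bar>L\<bar> + 1"
  have L'pos: "0 < L'" unfolding L'_def by simp
  define N where "N = real (CARD('a) * CARD('h))"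
  have cA: "1 \<le> CARD('a)" and cH: "1 \<le> CARD('h)"
    by (simp_all add: Suc_le_eq)
  have N1': "1 \<le> CARD('a) * CARD('h)" using cA cH by (simp add: Suc_le_eq)
  then have N1: "1 \<le> N" unfolding N_def by (metis of_nat_1 of_nat_le_iff)
  have "CARD('a) * 1 \<le> CARD('a) * CARD('h)" using cH by (intro mult_le_mono2)
  then have NA: "real CARD('a) \<le> N" unfolding N_def by (metis mult.right_neutral of_nat_le_iff)
  define \<epsilon> where "\<epsilon> = min (d / (4*L'*N)) (m*d / (2*N*(d/2 + C)))"
  have epos: "0 < \<epsilon>" unfolding \<epsilon>_def using dpos L'pos N1 mpos Cpos by auto
  show ?thesis
  proof (intro exI[of _ \<epsilon>] conjI epos ballI impI, elim conjE)
    fix x assume xX: "x \<in> stateX eta" and close: "xdist x xb < \<epsilon>" and yi: "agg x i > 0"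
    define y where "y = agg x"
    define e where "e = xdist x xb"
    have e0: "0 \<le> e" unfolding e_def xdist_def by (auto intro!: sum_nonneg)
    have xnn: "\<And>j h. 0 \<le> x j h" and xsum: "\<And>h. (\<Sum>j\<in>UNIV. x j h) = eta h"
      using xX unfolding stateX_def by auto
    have yY: "y \<in> simplexY"
    proof -
      have "(\<Sum>j\<in>UNIV. y j) = (\<Sum>h\<in>UNIV. \<Sum>j\<in>UNIV. x j h)"
        unfolding y_def agg_def by (rule sum.swap)
      also have "\<dots> = 1" using xsum etasum by simp
      finally show ?thesis unfolding simplexY_def y_def agg_def using xnn by (auto intro: sum_nonneg)
    qed
    have yd: "ydist y yb \<le> N * e" unfolding y_def yb_def e_def N_def by (rule ydist_le)
    have NeL: "L' * (N * e) \<le> d / 4"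
    proof -
      have "N * e \<le> N * \<epsilon>" using close N1 unfolding e_def by simp
      then have "L' * (N * e) \<le> L' * (N * \<epsilon>)" using L'pos by simp
      also have "\<dots> \<le> L' * (N * (d / (4*L'*N)))" unfolding \<epsilon>_def using L'pos N1
        by (intro mult_left_mono) auto
      also have "\<dots> = d / 4" using L'pos N1 by (simp add: field_simps)
      finally show ?thesis .
    qed
    have fl: "\<bar>f y a b - f yb a b\<bar> \<le> d / 4" for a b
    proof -
      have "\<bar>f y a b - f yb a b\<bar> \<le> L * ydist y yb" using Lip yY ybY by blast
      also have "\<dots> \<le> L' * ydist y yb" unfolding L'_def
        by (intro mult_right_mono) (auto simp: ydist_def intro!: sum_nonneg)
      also have "\<dots> \<le> L' * (N * e)" using yd L'pos by simp
      finally show ?thesis using NeL by linarith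
    qed
    define g where "g j = f y j i - f y i j" for j
    have gS: "d / 2 \<le> g j" if "j \<in> S" for j
      using fl[of j i] fl[of i j] dle[OF that] unfolding g_def g0_def abs_le_iff by linarith
    have gall: "- C \<le> g j" for j
      using fl[of j i] fl[of i j] C0ge[of j] unfolding g_def g0_def C_def abs_le_iff by linarith
    have Bpos: "0 < (\<Sum>j\<in>UNIV. x j h * g j)" for h
    proof -
      define s where "s = (\<Sum>j\<in>UNIV - S. x j h)"
      have s_le: "s \<le> N * e"
      proof -
        have "s = (\<Sum>j\<in>UNIV - S. \<bar>x j h - xb j h\<bar>)" unfolding s_def
          using zeroS xnn by (intro sum.cong) auto
        also have "\<dots> \<le> (\<Sum>j\<in>UNIV. \<bar>x j h - xb j h\<bar>)" by (intro sum_mono2) auto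
        also have "\<dots> \<le> (\<Sum>j\<in>(UNIV::'a set). e)" unfolding e_def by (intro sum_mono comp_le_xdist)
        also have "\<dots> = real CARD('a) * e" by simp
        also have "\<dots> \<le> N * e" using NA e0 by (intro mult_right_mono)
        finally show ?thesis .
      qed
      have split: "(\<Sum>j\<in>UNIV. F j) = (\<Sum>j\<in>UNIV - S. F j) + (\<Sum>j\<in>S. F j)" for F :: "'a \<Rightarrow> real"
        by (rule sum.subset_diff) auto
      have sS: "(\<Sum>j\<in>S. x j h) = eta h - s" using split[of "\<lambda>j. x j h"] xsum[of h] unfolding s_def by simp
      have p1: "(\<Sum>j\<in>S. x j h * g j) \<ge> (\<Sum>j\<in>S. x j h * (d/2))"
        by (intro sum_mono mult_left_mono gS xnn) auto
      have p2: "(\<Sum>j\<in>UNIV - S. x j h * g j) \<ge> (\<Sum>j\<in>UNIV - S. x j h * (- C))"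
        by (intro sum_mono mult_left_mono gall xnn)
      have "(\<Sum>j\<in>UNIV. x j h * g j) \<ge> (d/2) * (eta h - s) - C * s"
      proof -
        have q1: "(\<Sum>j\<in>S. x j h * (d/2)) = (d/2) * (\<Sum>j\<in>S. x j h)"
          by (simp add: sum_distrib_left mult.commute)
        have q2: "(\<Sum>j\<in>UNIV - S. x j h * (- C)) = - C * s"
          unfolding s_def by (simp add: sum_distrib_left mult.commute)
        have q3: "(d/2) * (eta h - s) = (d/2) * (\<Sum>j\<in>S. x j h)" using sS by simp
        show ?thesis using split[of "\<lambda>j. x j h * g j"] p1 p2 q1 q2 q3 by linarith
      qed
      moreover have "(d/2 + C) * s < (d/2) * eta h"
      proof -
        have "(d/2 + C) * s \<le> (d/2 + C) * (N * e)" using s_le dpos Cpos by simp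
        also have "\<dots> < (d/2 + C) * (N * \<epsilon>)" using close N1 dpos Cpos unfolding e_def by simp
        also have "\<dots> \<le> (d/2 + C) * (N * (m*d / (2*N*(d/2 + C))))" unfolding \<epsilon>_def
          using dpos Cpos N1 by (intro mult_left_mono) auto
        also have "\<dots> = (d/2) * m" using aux_cancel[of "d/2 + C" N "m*d"] dpos Cpos N1 by simp
        also have "\<dots> \<le> (d/2) * eta h" using mle dpos by simp
        finally show ?thesis .
      qed
      ultimately show ?thesis by (simp add: algebra_simps)
    qed
    have "\<exists>k0. 0 < x i k0"
    proof (rule ccontr)
      assume "\<not> (\<exists>k0. 0 < x i k0)"
      then have "\<forall>k. x i k \<le> 0" by (simp add: not_less)
      then have "agg x i \<le> 0" unfolding agg_def by (simp add: sum_nonpos)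
      with yi show False by simp
    qed
    then obtain k0 where k0: "0 < x i k0" by blast
    have "(\<Sum>h\<in>UNIV. xdot W f x i h) =
      (\<Sum>h\<in>UNIV. \<Sum>k\<in>UNIV. W h k * x i k * (\<Sum>j\<in>UNIV. x j h * (f (agg x) j i - f (agg x) i j)))"
      by (rule ydot_formula) (rule sym)
    also have "\<dots> = (\<Sum>h\<in>UNIV. \<Sum>k\<in>UNIV. W h k * x i k * (\<Sum>j\<in>UNIV. x j h * g j))"
      unfolding g_def y_def ..
    also have "\<dots> > 0"
    proof (rule sum_pos2[where i=k0])
      show "0 < (\<Sum>k\<in>UNIV. W k0 k * x i k * (\<Sum>j\<in>UNIV. x j k0 * g j))"
      proof (rule sum_pos2[where i=k0])
        show "0 < W k0 k0 * x i k0 * (\<Sum>j\<in>UNIV. x j k0 * g j)"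
          using Wd[of k0] k0 Bpos[of k0] by simp
        show "\<And>k. k \<in> UNIV \<Longrightarrow> 0 \<le> W k0 k * x i k * (\<Sum>j\<in>UNIV. x j k0 * g j)"
          by (intro mult_nonneg_nonneg Wnn xnn less_imp_le[OF Bpos])
      qed auto
      show "\<And>h. h \<in> UNIV \<Longrightarrow> 0 \<le> (\<Sum>k\<in>UNIV. W h k * x i k * (\<Sum>j\<in>UNIV. x j h * g j))"
        by (intro sum_nonneg mult_nonneg_nonneg Wnn xnn less_imp_le[OF Bpos])
    qed auto
    finally show "(\<Sum>h\<in>UNIV. xdot W f x i h) > 0" .
  qed
qed

end
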